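(* Let $g(x,y)=\sum_{i,j=-\infty}^{\infty}c(i,j)x^iy^j$ be a nonzero bilateral formal series with $g\perp g$, and let $f(x,y)$ be a bilateral formal series. Then $f\perp g$ if and only if there exist integers $m_0,k_0$ with $c(m_0,k_0)\neq 0$ and bilateral formal series $P(x)=\sum_{i=-\infty}^{\infty}p_ix^i$, $Q(x)=\sum_{i=-\infty}^{\infty}q_ix^i$ (with arbitrary complex coefficient sequences $p_i,q_i$) such that $$f(x,y)=\frac{1}{c(m_0,k_0)}\Big(P(x)\,[x^{m_0}]g(x,y)-Q(x)\,[x^{k_0}]g(x,y)\Big),$$ where $[x^{m}]g(x,y)=\sum_{j=-\infty}^{\infty}c(m,j)y^j$ denotes the coefficient of $x^{m}$ in $g(x,y)$.
   Context: A bilateral formal series in $x,y$ is a formal expression $\sum_{i,j\in\mathbb{Z}}\lambda(i,j)x^iy^j$ with complex coefficients. For two such series $f,g$, the expression $g(u,v)f(z,w)-g(u,w)f(z,v)+g(v,w)f(z,u)$ is a well-defined formal series in four independent variables $u,v,w,z$. One writes $f\perp g$ if this expression is identically zero. *)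

theory Defs
  imports Complex_Main
begin

text \<open>A bilateral formal series sum over i,j in Z of lambda(i,j) x^i y^j is represented
by its coefficient function. A one-variable bilateral series is a function int => complex.\<close>

type_synonym bseries2 = "int \<Rightarrow> int \<Rightarrow> complex"
type_synonym bseries1 = "int \<Rightarrow> complex"

text \<open>The coefficient of u^a v^b w^c z^d in g(u,v)f(z,w) - g(u,w)f(z,v) + g(v,w)f(z,u)
is g(a,b)f(d,c) - g(a,c)f(d,b) + g(b,c)f(d,a).  f is orthogonal to g iff all vanish.\<close>

definition perp :: "bseries2 \<Rightarrow> bseries2 \<Rightarrow> bool" where
  "perp f g \<longleftrightarrow> (\<forall>a b c d.
      g a b * f d c - g a c * f d b + g b c * f d a = 0)"

definition xcoeff :: "bseries2 \<Rightarrow> int \<Rightarrow> bseries1" where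
  "xcoeff g m = (\<lambda>j. g m j)"

definition sepmul :: "bseries1 \<Rightarrow> bseries1 \<Rightarrow> bseries2" where
  "sepmul P h = (\<lambda>i j. P i * h j)"

end

theory Submission
  imports Defs
begin

theorem theorem2p2:
  fixes f g :: bseries2
  assumes "g \<noteq> (\<lambda>_ _. 0)"
    and "perp g g"
  shows "perp f g \<longleftrightarrow>
    (\<exists>(m0::int) (k0::int) (P::bseries1) (Q::bseries1). g m0 k0 \<noteq> 0 \<and>
       f = (\<lambda>i j. (sepmul P (xcoeff g m0) i j - sepmul Q (xcoeff g k0) i j) / g m0 k0))"
proof
  assume pf: "perp f g"
  obtain m0 k0 where nz: "g m0 k0 \<noteq> 0" using assms(1) by blast
  have "f = (\<lambda>i j. (sepmul (\<lambda>i. f i k0) (xcoeff g m0) i j - sepmul (\<lambda>i. f i m0) (xcoeff g k0) i j) / g m0 k0)"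
  proof (intro ext)
    fix i j
    have "g m0 k0 * f i j - g m0 j * f i k0 + g k0 j * f i m0 = 0"
      using pf unfolding perp_def by blast
    then show "f i j = (sepmul (\<lambda>i. f i k0) (xcoeff g m0) i j - sepmul (\<lambda>i. f i m0) (xcoeff g k0) i j) / g m0 k0"
      using nz unfolding sepmul_def xcoeff_def by (simp add: field_simps)
  qed
  then show "\<exists>(m0::int) (k0::int) (P::bseries1) (Q::bseries1). g m0 k0 \<noteq> 0 \<and>
       f = (\<lambda>i j. (sepmul P (xcoeff g m0) i j - sepmul Q (xcoeff g k0) i j) / g m0 k0)"
    using nz by blast
next
  assume "\<exists>(m0::int) (k0::int) (P::bseries1) (Q::bseries1). g m0 k0 \<noteq> 0 \<and>
       f = (\<lambda>i j. (sepmul P (xcoeff g m0) i j - sepmul Q (xcoeff g k0) i j) / g m0 k0)"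
  then obtain m0 k0 P Q where nz: "g m0 k0 \<noteq> 0" and
    fd: "f = (\<lambda>i j. (P i * g m0 j - Q i * g k0 j) / g m0 k0)"
    unfolding sepmul_def xcoeff_def by blast
  show "perp f g"
    unfolding perp_def
  proof (intro allI)
    fix a b c d
    have h1: "g a b * g m0 c - g a c * g m0 b + g b c * g m0 a = 0"
      using assms(2) unfolding perp_def by blast
    have h2: "g a b * g k0 c - g a c * g k0 b + g b c * g k0 a = 0"
      using assms(2) unfolding perp_def by blast
    have "g a b * (P d * g m0 c - Q d * g k0 c) - g a c * (P d * g m0 b - Q d * g k0 b)
          + g b c * (P d * g m0 a - Q d * g k0 a)
        = P d * (g a b * g m0 c - g a c * g m0 b + g b c * g m0 a)
          - Q d * (g a b * g k0 c - g a c * g k0 b + g b c * g k0 a)"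
      by (simp add: algebra_simps)
    also have "\<dots> = 0" using h1 h2 by simp
    finally have e: "g a b * (P d * g m0 c - Q d * g k0 c) - g a c * (P d * g m0 b - Q d * g k0 b)
          + g b c * (P d * g m0 a - Q d * g k0 a) = 0" .
    have "g a b * f d c - g a c * f d b + g b c * f d a
        = (g a b * (P d * g m0 c - Q d * g k0 c) - g a c * (P d * g m0 b - Q d * g k0 b)
          + g b c * (P d * g m0 a - Q d * g k0 a)) / g m0 k0"
      unfolding fd by (simp add: add_divide_distrib diff_divide_distrib times_divide_eq_right right_diff_distrib)
    then show "g a b * f d c - g a c * f d b + g b c * f d a = 0" using e by simp
  qed
qed

end
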